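(* Suppose $S$ is $(K,\mu,\alpha)$-decaying and $V$ is $(J,\mu,\beta)$-decaying for some $\alpha,\beta\ge4$. Then $[S,V]$ has a local decomposition which is $(cKJ,\mu)$-decaying (i.e. $(cKJ,\mu,0)$-decaying) for some constant $c$ (independent of $L,K,J,\mu$).
   Context: Let $\Lambda=\mathbb{Z}_L\times\mathbb{Z}_L$ (periodic boundary conditions), each site carrying a finite-dimensional Hilbert space, $\mathcal{H}$ their tensor product. For $r\ge1$, $\mathcal{S}(r)$ is the set of all $r\times r$ square blocks of sites ($\mathcal{S}(L)=\{\Lambda\}$, $\mathcal{S}(r)=\emptyset$ for $r>L$). A local decomposition of an operator $V$ on $\mathcal{H}$ is a family $\{V_{r,A}\}$, $r\ge1$, $A\in\mathcal{S}(r)$, with $V_{r,A}$ supported on $A$ and $V=\sum_{r\ge1}\sum_{A\in\mathcal{S}(r)}V_{r,A}$. It is $(J,\mu,\alpha)$-decaying if $\max_{r\ge1}\max_{A\in\mathcal{S}(r)}\|V_{r,A}\|\,r^{\alpha}e^{\mu r}\le J$; an operator is called $(J,\mu,\alpha)$-decaying if it has such a local decomposition, and $(J,\mu)$-decaying means $(J,\mu,0)$-decaying. *)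

theory Defs
  imports Complex_Main
begin

text \<open>Sites of the torus Z_L x Z_L are represented by pairs (i,j) with i,j < L.
  Site x carries the Hilbert space C^(d x); a basis configuration of the tensor
  product is a function sigma with sigma x < d x on sites (and 0 elsewhere).
  Operators on the tensor product are matrices indexed by configurations.\<close>

type_synonym site = "nat \<times> nat"
type_synonym config = "site \<Rightarrow> nat"
type_synonym op = "config \<Rightarrow> config \<Rightarrow> complex"

definition sites :: "nat \<Rightarrow> site set" where
  "sites L = {0..<L} \<times> {0..<L}"

definition configs :: "nat \<Rightarrow> (site \<Rightarrow> nat) \<Rightarrow> config set" where
  "configs L d = {\<sigma>. (\<forall>x\<in>sites L. \<sigma> x < d x) \<and> (\<forall>x. x \<notin> sites L \<longrightarrow> \<sigma> x = 0)}"

text \<open>Operator product and commutator (only entries indexed by configurations matter).\<close>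
definition op_mult :: "nat \<Rightarrow> (site \<Rightarrow> nat) \<Rightarrow> op \<Rightarrow> op \<Rightarrow> op" where
  "op_mult L d M N = (\<lambda>\<sigma> \<tau>. \<Sum>\<rho>\<in>configs L d. M \<sigma> \<rho> * N \<rho> \<tau>)"

definition commutator :: "nat \<Rightarrow> (site \<Rightarrow> nat) \<Rightarrow> op \<Rightarrow> op \<Rightarrow> op" where
  "commutator L d M N = (\<lambda>\<sigma> \<tau>. op_mult L d M N \<sigma> \<tau> - op_mult L d N M \<sigma> \<tau>)"

definition op_norm :: "nat \<Rightarrow> (site \<Rightarrow> nat) \<Rightarrow> op \<Rightarrow> real" where
  "op_norm L d M = Sup {sqrt (\<Sum>\<sigma>\<in>configs L d. (cmod (\<Sum>\<tau>\<in>configs L d. M \<sigma> \<tau> * v \<tau>))\<^sup>2) | v.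
                          (\<Sum>\<tau>\<in>configs L d. (cmod (v \<tau>))\<^sup>2) \<le> 1}"

text \<open>M is supported on A: M = X \<otimes> Id on the complement of A.\<close>
definition supported_on :: "nat \<Rightarrow> (site \<Rightarrow> nat) \<Rightarrow> site set \<Rightarrow> op \<Rightarrow> bool" where
  "supported_on L d A M \<longleftrightarrow>
     (\<forall>\<sigma>\<in>configs L d. \<forall>\<tau>\<in>configs L d.
        (\<exists>x\<in>sites L - A. \<sigma> x \<noteq> \<tau> x) \<longrightarrow> M \<sigma> \<tau> = 0) \<and>
     (\<forall>\<sigma>\<in>configs L d. \<forall>\<tau>\<in>configs L d. \<forall>\<sigma>'\<in>configs L d. \<forall>\<tau>'\<in>configs L d.
        (\<forall>x\<in>A. \<sigma> x = \<sigma>' x \<and> \<tau> x = \<tau>' x) \<and>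
        (\<forall>x\<in>sites L - A. \<sigma> x = \<tau> x \<and> \<sigma>' x = \<tau>' x) \<longrightarrow> M \<sigma> \<tau> = M \<sigma>' \<tau>')"

text \<open>r x r blocks on the torus; S(r) is empty for r > L, and S(L) = {Lambda}.\<close>
definition block :: "nat \<Rightarrow> nat \<Rightarrow> site \<Rightarrow> site set" where
  "block L r x = {((fst x + i) mod L, (snd x + j) mod L) | i j. i < r \<and> j < r}"

definition blocks :: "nat \<Rightarrow> nat \<Rightarrow> site set set" where
  "blocks L r = (if r \<le> L then block L r ` sites L else {})"

definition local_decomp :: "nat \<Rightarrow> (site \<Rightarrow> nat) \<Rightarrow> (nat \<Rightarrow> site set \<Rightarrow> op) \<Rightarrow> op \<Rightarrow> bool" where
  "local_decomp L d W V \<longleftrightarrow>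
     (\<forall>r\<ge>1. \<forall>A\<in>blocks L r. supported_on L d A (W r A)) \<and>
     (\<forall>\<sigma>\<in>configs L d. \<forall>\<tau>\<in>configs L d.
        V \<sigma> \<tau> = (\<Sum>r\<in>{1..L}. \<Sum>A\<in>blocks L r. W r A \<sigma> \<tau>))"

definition decaying_decomp :: "nat \<Rightarrow> (site \<Rightarrow> nat) \<Rightarrow> (nat \<Rightarrow> site set \<Rightarrow> op) \<Rightarrow> real \<Rightarrow> real \<Rightarrow> real \<Rightarrow> bool" where
  "decaying_decomp L d W J \<mu> \<alpha> \<longleftrightarrow>
     (\<forall>r\<ge>1. \<forall>A\<in>blocks L r. op_norm L d (W r A) * real r powr \<alpha> * exp (\<mu> * real r) \<le> J)"

definition decaying :: "nat \<Rightarrow> (site \<Rightarrow> nat) \<Rightarrow> op \<Rightarrow> real \<Rightarrow> real \<Rightarrow> real \<Rightarrow> bool" where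
  "decaying L d V J \<mu> \<alpha> \<longleftrightarrow> (\<exists>W. local_decomp L d W V \<and> decaying_decomp L d W J \<mu> \<alpha>)"

end

theory Submission
  imports Defs "HOL-Analysis.L2_Norm" "HOL-Library.FuncSet"
begin

definition app :: "nat \<Rightarrow> (site \<Rightarrow> nat) \<Rightarrow> op \<Rightarrow> (config \<Rightarrow> complex) \<Rightarrow> config \<Rightarrow> complex" where
  "app L d M v = (\<lambda>\<sigma>. \<Sum>\<tau>\<in>configs L d. M \<sigma> \<tau> * v \<tau>)"

definition vn :: "nat \<Rightarrow> (site \<Rightarrow> nat) \<Rightarrow> (config \<Rightarrow> complex) \<Rightarrow> real" where
  "vn L d v = L2_set (\<lambda>\<tau>. cmod (v \<tau>)) (configs L d)"

lemma finite_sites[simp]: "finite (sites L)"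
  by (simp add: sites_def)

lemma finite_configs[simp]: "finite (configs L d)"
proof -
  let ?f = "\<lambda>\<sigma>::config. restrict \<sigma> (sites L)"
  have "inj_on ?f (configs L d)"
  proof (rule inj_onI)
    fix x y assume "x \<in> configs L d" "y \<in> configs L d" "?f x = ?f y"
    show "x = y"
    proof
      fix z show "x z = y z"
      proof (cases "z \<in> sites L")
        case True then show ?thesis using \<open>?f x = ?f y\<close> by (metis restrict_apply')
      next
        case False then show ?thesis using \<open>x \<in> configs L d\<close> \<open>y \<in> configs L d\<close>
          by (cases z) (simp add: configs_def)
      qed
    qed
  qed
  moreover have "?f ` configs L d \<subseteq> PiE (sites L) (\<lambda>x. {..<d x})"
    by (auto simp: configs_def)
  moreover have "finite (PiE (sites L) (\<lambda>x. {..<d x}))"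
    by (rule finite_PiE) auto
  ultimately show ?thesis by (metis inj_on_finite)
qed

lemma op_norm_alt: "op_norm L d M = Sup {vn L d (app L d M v) | v. vn L d v \<le> 1}"
  unfolding op_norm_def vn_def app_def L2_set_def
  by (simp add: norm_mult)

lemma app_frob: "vn L d (app L d M v) \<le> L2_set (\<lambda>\<sigma>. L2_set (\<lambda>\<tau>. cmod (M \<sigma> \<tau>)) (configs L d)) (configs L d) * vn L d v"
proof -
  let ?C = "configs L d"
  have "\<And>\<sigma>. cmod (app L d M v \<sigma>) \<le> L2_set (\<lambda>\<tau>. cmod (M \<sigma> \<tau>)) ?C * vn L d v"
  proof -
    fix \<sigma>
    have "cmod (app L d M v \<sigma>) \<le> (\<Sum>\<tau>\<in>?C. cmod (M \<sigma> \<tau> * v \<tau>))"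
      unfolding app_def by (rule norm_sum)
    also have "\<dots> = (\<Sum>\<tau>\<in>?C. \<bar>cmod (M \<sigma> \<tau>)\<bar> * \<bar>cmod (v \<tau>)\<bar>)"
      by (simp add: norm_mult)
    also have "\<dots> \<le> L2_set (\<lambda>\<tau>. cmod (M \<sigma> \<tau>)) ?C * vn L d v"
      unfolding vn_def by (rule L2_set_mult_ineq)
    finally show "cmod (app L d M v \<sigma>) \<le> L2_set (\<lambda>\<tau>. cmod (M \<sigma> \<tau>)) ?C * vn L d v" .
  qed
  then have "vn L d (app L d M v) \<le> L2_set (\<lambda>\<sigma>. L2_set (\<lambda>\<tau>. cmod (M \<sigma> \<tau>)) ?C * vn L d v) ?C"
    unfolding vn_def by (intro L2_set_mono) auto
  also have "\<dots> = L2_set (\<lambda>\<sigma>. L2_set (\<lambda>\<tau>. cmod (M \<sigma> \<tau>)) ?C) ?C * vn L d v"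
    by (simp add: L2_set_left_distrib vn_def)
  finally show ?thesis .
qed

lemma vn_nonneg[simp]: "0 \<le> vn L d v"
  by (simp add: vn_def)

lemma opn_set_bdd: "bdd_above {vn L d (app L d M v) | v. vn L d v \<le> 1}"
proof -
  let ?B = "L2_set (\<lambda>\<sigma>. L2_set (\<lambda>\<tau>. cmod (M \<sigma> \<tau>)) (configs L d)) (configs L d)"
  have "\<And>v. vn L d v \<le> 1 \<Longrightarrow> vn L d (app L d M v) \<le> ?B"
  proof -
    fix v assume "vn L d v \<le> 1"
    have "vn L d (app L d M v) \<le> ?B * vn L d v" by (rule app_frob)
    also have "\<dots> \<le> ?B" using \<open>vn L d v \<le> 1\<close> by (simp add: mult_left_le)
    finally show "vn L d (app L d M v) \<le> ?B" .
  qed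
  then show ?thesis by (auto intro!: bdd_aboveI)
qed

lemma vn_zero: "vn L d (\<lambda>_. 0) = 0"
  by (simp add: vn_def L2_set_def)

lemma app_zero: "app L d M (\<lambda>_. 0) = (\<lambda>_. 0)"
  by (simp add: app_def)

lemma opn_set_ne: "vn L d (app L d M (\<lambda>_. 0)) \<in> {vn L d (app L d M v) | v. vn L d v \<le> 1}"
  using vn_zero by auto

lemma op_norm_nonneg: "0 \<le> op_norm L d M"
  unfolding op_norm_alt
  by (rule order_trans[OF _ cSup_upper[OF opn_set_ne opn_set_bdd]]) simp

lemma op_norm_le:
  assumes "\<And>v. vn L d v \<le> 1 \<Longrightarrow> vn L d (app L d M v) \<le> B"
  shows "op_norm L d M \<le> B"
  unfolding op_norm_alt
proof (rule cSup_least)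
  show "{vn L d (app L d M v) |v. vn L d v \<le> 1} \<noteq> {}" using opn_set_ne[of L d M] by blast
qed (use assms in auto)

lemma app_scale: "app L d M (\<lambda>\<tau>. c * v \<tau>) = (\<lambda>\<sigma>. c * app L d M v \<sigma>)"
  by (simp add: app_def sum_distrib_left algebra_simps)

lemma vn_scale: "vn L d (\<lambda>\<tau>. c * v \<tau>) = cmod c * vn L d v"
  by (simp add: vn_def norm_mult L2_set_right_distrib)

lemma app_le: "vn L d (app L d M v) \<le> op_norm L d M * vn L d v"
proof (cases "vn L d v = 0")
  case True
  then have "\<forall>\<tau>\<in>configs L d. v \<tau> = 0" by (simp add: vn_def L2_set_eq_0_iff)
  then have "app L d M v = (\<lambda>_. 0)" by (simp add: app_def)
  then show ?thesis using vn_zero op_norm_nonneg by (simp add: True)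
next
  case False
  then have pos: "vn L d v > 0" using vn_nonneg[of L d v] by linarith
  let ?c = "complex_of_real (1 / vn L d v)"
  have "vn L d (\<lambda>\<tau>. ?c * v \<tau>) = cmod ?c * vn L d v" by (rule vn_scale)
  then have "vn L d (\<lambda>\<tau>. ?c * v \<tau>) = 1" using pos by (simp add: norm_divide)
  then have "vn L d (app L d M (\<lambda>\<tau>. ?c * v \<tau>)) \<le> op_norm L d M"
    unfolding op_norm_alt by (intro cSup_upper[OF _ opn_set_bdd]) auto
  then have "vn L d (app L d M v) / vn L d v \<le> op_norm L d M"
    using pos by (simp only: app_scale vn_scale) (simp add: norm_divide)
  then show ?thesis using pos by (simp add: divide_le_eq mult.commute)
qed


lemma vn_add: "vn L d (\<lambda>\<sigma>. g \<sigma> + h \<sigma>) \<le> vn L d g + vn L d h"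
proof -
  have "vn L d (\<lambda>\<sigma>. g \<sigma> + h \<sigma>) \<le> L2_set (\<lambda>\<sigma>. cmod (g \<sigma>) + cmod (h \<sigma>)) (configs L d)"
    unfolding vn_def by (intro L2_set_mono norm_triangle_ineq) auto
  also have "\<dots> \<le> vn L d g + vn L d h" unfolding vn_def by (rule L2_set_triangle_ineq)
  finally show ?thesis .
qed

lemma vn_diff: "vn L d (\<lambda>\<sigma>. g \<sigma> - h \<sigma>) \<le> vn L d g + vn L d h"
proof -
  have "vn L d (\<lambda>\<sigma>. g \<sigma> - h \<sigma>) \<le> L2_set (\<lambda>\<sigma>. cmod (g \<sigma>) + cmod (h \<sigma>)) (configs L d)"
    unfolding vn_def by (intro L2_set_mono norm_triangle_ineq4) auto
  also have "\<dots> \<le> vn L d g + vn L d h" unfolding vn_def by (rule L2_set_triangle_ineq)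
  finally show ?thesis .
qed

lemma vn_sum: "finite F \<Longrightarrow> vn L d (\<lambda>\<sigma>. \<Sum>p\<in>F. g p \<sigma>) \<le> (\<Sum>p\<in>F. vn L d (g p))"
proof (induction F rule: finite_induct)
  case empty then show ?case by (simp add: vn_zero)
next
  case (insert x F)
  have "vn L d (\<lambda>\<sigma>. \<Sum>p\<in>insert x F. g p \<sigma>) = vn L d (\<lambda>\<sigma>. g x \<sigma> + (\<Sum>p\<in>F. g p \<sigma>))"
    using insert by simp
  also have "\<dots> \<le> vn L d (g x) + vn L d (\<lambda>\<sigma>. \<Sum>p\<in>F. g p \<sigma>)" by (rule vn_add)
  also have "\<dots> \<le> vn L d (g x) + (\<Sum>p\<in>F. vn L d (g p))" using insert by simp
  finally show ?case using insert by simp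
qed

lemma app_sum: "app L d (\<lambda>\<sigma> \<tau>. \<Sum>p\<in>F. f p \<sigma> \<tau>) v = (\<lambda>\<sigma>. \<Sum>p\<in>F. app L d (f p) v \<sigma>)"
  unfolding app_def sum_distrib_right by (rule ext, rule sum.swap)

lemma op_norm_sum:
  assumes "finite F"
  shows "op_norm L d (\<lambda>\<sigma> \<tau>. \<Sum>p\<in>F. f p \<sigma> \<tau>) \<le> (\<Sum>p\<in>F. op_norm L d (f p))"
proof (rule op_norm_le)
  fix v assume v: "vn L d v \<le> 1"
  have "vn L d (app L d (\<lambda>\<sigma> \<tau>. \<Sum>p\<in>F. f p \<sigma> \<tau>) v) \<le> (\<Sum>p\<in>F. vn L d (app L d (f p) v))"
    unfolding app_sum using assms by (rule vn_sum)
  also have "\<dots> \<le> (\<Sum>p\<in>F. op_norm L d (f p))"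
  proof (rule sum_mono)
    fix p
    have "vn L d (app L d (f p) v) \<le> op_norm L d (f p) * vn L d v" by (rule app_le)
    also have "\<dots> \<le> op_norm L d (f p)" using v op_norm_nonneg[of L d "f p"] by (simp add: mult_left_le)
    finally show "vn L d (app L d (f p) v) \<le> op_norm L d (f p)" .
  qed
  finally show "vn L d (app L d (\<lambda>\<sigma> \<tau>. \<Sum>p\<in>F. f p \<sigma> \<tau>) v) \<le> (\<Sum>p\<in>F. op_norm L d (f p))" .
qed

lemma app_mult: "app L d (op_mult L d M N) v = app L d M (app L d N v)"
  unfolding app_def op_mult_def
proof (rule ext)
  fix \<sigma>
  have "(\<Sum>\<tau>\<in>configs L d. (\<Sum>\<rho>\<in>configs L d. M \<sigma> \<rho> * N \<rho> \<tau>) * v \<tau>)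
      = (\<Sum>\<tau>\<in>configs L d. \<Sum>\<rho>\<in>configs L d. M \<sigma> \<rho> * (N \<rho> \<tau> * v \<tau>))"
    by (simp add: sum_distrib_right mult.assoc)
  also have "\<dots> = (\<Sum>\<rho>\<in>configs L d. \<Sum>\<tau>\<in>configs L d. M \<sigma> \<rho> * (N \<rho> \<tau> * v \<tau>))"
    by (rule sum.swap)
  also have "\<dots> = (\<Sum>\<rho>\<in>configs L d. M \<sigma> \<rho> * (\<Sum>\<tau>\<in>configs L d. N \<rho> \<tau> * v \<tau>))"
    by (simp add: sum_distrib_left)
  finally show "(\<Sum>\<tau>\<in>configs L d. (\<Sum>\<rho>\<in>configs L d. M \<sigma> \<rho> * N \<rho> \<tau>) * v \<tau>)
      = (\<Sum>\<rho>\<in>configs L d. M \<sigma> \<rho> * (\<Sum>\<tau>\<in>configs L d. N \<rho> \<tau> * v \<tau>))" .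
qed

lemma app_comm: "app L d (commutator L d M N) v = (\<lambda>\<sigma>. app L d (op_mult L d M N) v \<sigma> - app L d (op_mult L d N M) v \<sigma>)"
  unfolding app_def commutator_def by (simp add: left_diff_distrib sum_subtractf)

lemma op_norm_comm: "op_norm L d (commutator L d M N) \<le> 2 * op_norm L d M * op_norm L d N"
proof (rule op_norm_le)
  fix v assume v: "vn L d v \<le> 1"
  have M: "0 \<le> op_norm L d M" and N: "0 \<le> op_norm L d N" by (rule op_norm_nonneg)+
  have a: "vn L d (app L d (op_mult L d M N) v) \<le> op_norm L d M * op_norm L d N"
  proof -
    have "vn L d (app L d (op_mult L d M N) v) \<le> op_norm L d M * vn L d (app L d N v)"
      unfolding app_mult by (rule app_le)
    also have "\<dots> \<le> op_norm L d M * (op_norm L d N * vn L d v)"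
      by (rule mult_left_mono[OF app_le M])
    also have "\<dots> \<le> op_norm L d M * op_norm L d N"
      using v M N by (intro mult_left_mono mult_left_le) auto
    finally show ?thesis .
  qed
  have b: "vn L d (app L d (op_mult L d N M) v) \<le> op_norm L d N * op_norm L d M"
  proof -
    have "vn L d (app L d (op_mult L d N M) v) \<le> op_norm L d N * vn L d (app L d M v)"
      unfolding app_mult by (rule app_le)
    also have "\<dots> \<le> op_norm L d N * (op_norm L d M * vn L d v)"
      by (rule mult_left_mono[OF app_le N])
    also have "\<dots> \<le> op_norm L d N * op_norm L d M"
      using v M N by (intro mult_left_mono mult_left_le) auto
    finally show ?thesis .
  qed
  show "vn L d (app L d (commutator L d M N) v) \<le> 2 * op_norm L d M * op_norm L d N"
    unfolding app_comm using vn_diff[of L d "app L d (op_mult L d M N) v" "app L d (op_mult L d N M) v"] a b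
    by (simp add: algebra_simps)
qed


lemma supp1: "supported_on L d A M \<Longrightarrow> \<sigma> \<in> configs L d \<Longrightarrow> \<tau> \<in> configs L d \<Longrightarrow> x \<in> sites L \<Longrightarrow> x \<notin> A
  \<Longrightarrow> \<sigma> x \<noteq> \<tau> x \<Longrightarrow> M \<sigma> \<tau> = 0"
  unfolding supported_on_def by blast

lemma supp2: "supported_on L d A M \<Longrightarrow> \<sigma> \<in> configs L d \<Longrightarrow> \<tau> \<in> configs L d \<Longrightarrow> \<sigma>' \<in> configs L d
  \<Longrightarrow> \<tau>' \<in> configs L d \<Longrightarrow> (\<And>x. x \<in> A \<Longrightarrow> \<sigma> x = \<sigma>' x \<and> \<tau> x = \<tau>' x)
  \<Longrightarrow> (\<And>x. x \<in> sites L \<Longrightarrow> x \<notin> A \<Longrightarrow> \<sigma> x = \<tau> x \<and> \<sigma>' x = \<tau>' x) \<Longrightarrow> M \<sigma> \<tau> = M \<sigma>' \<tau>'"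
  unfolding supported_on_def by blast

lemma suppI:
  assumes "\<And>\<sigma> \<tau> x. \<sigma> \<in> configs L d \<Longrightarrow> \<tau> \<in> configs L d \<Longrightarrow> x \<in> sites L \<Longrightarrow> x \<notin> A
             \<Longrightarrow> \<sigma> x \<noteq> \<tau> x \<Longrightarrow> M \<sigma> \<tau> = 0"
  and "\<And>\<sigma> \<tau> \<sigma>' \<tau>'. \<sigma> \<in> configs L d \<Longrightarrow> \<tau> \<in> configs L d \<Longrightarrow> \<sigma>' \<in> configs L d
  \<Longrightarrow> \<tau>' \<in> configs L d \<Longrightarrow> (\<And>x. x \<in> A \<Longrightarrow> \<sigma> x = \<sigma>' x \<and> \<tau> x = \<tau>' x)
  \<Longrightarrow> (\<And>x. x \<in> sites L \<Longrightarrow> x \<notin> A \<Longrightarrow> \<sigma> x = \<tau> x \<and> \<sigma>' x = \<tau>' x) \<Longrightarrow> M \<sigma> \<tau> = M \<sigma>' \<tau>'"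
  shows "supported_on L d A M"
  unfolding supported_on_def using assms by blast

lemma supp_mono:
  assumes M: "supported_on L d A M" and AC: "A \<subseteq> C"
  shows "supported_on L d C M"
proof (rule suppI)
  fix \<sigma> \<tau> x assume "\<sigma> \<in> configs L d" "\<tau> \<in> configs L d" "x \<in> sites L" "x \<notin> C" "\<sigma> x \<noteq> \<tau> x"
  then show "M \<sigma> \<tau> = 0" using supp1[OF M] AC by blast
next
  fix \<sigma> \<tau> \<sigma>' \<tau>'
  assume c: "\<sigma> \<in> configs L d" "\<tau> \<in> configs L d" "\<sigma>' \<in> configs L d" "\<tau>' \<in> configs L d"
    and onC: "\<And>x. x \<in> C \<Longrightarrow> \<sigma> x = \<sigma>' x \<and> \<tau> x = \<tau>' x"
    and offC: "\<And>x. x \<in> sites L \<Longrightarrow> x \<notin> C \<Longrightarrow> \<sigma> x = \<tau> x \<and> \<sigma>' x = \<tau>' x"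
  show "M \<sigma> \<tau> = M \<sigma>' \<tau>'"
  proof (cases "\<exists>x\<in>sites L - A. \<sigma> x \<noteq> \<tau> x")
    case True
    then obtain x where x: "x \<in> sites L" "x \<notin> A" "\<sigma> x \<noteq> \<tau> x" by blast
    have "x \<in> C" using offC x by blast
    then have "\<sigma>' x \<noteq> \<tau>' x" using onC x by metis
    then show ?thesis using supp1[OF M c(1,2) x(1,2,3)] supp1[OF M c(3,4) x(1,2)] by simp
  next
    case False
    show ?thesis
    proof (rule supp2[OF M c])
      fix x assume "x \<in> A" then show "\<sigma> x = \<sigma>' x \<and> \<tau> x = \<tau>' x" using onC AC by blast
    next
      fix x assume x: "x \<in> sites L" "x \<notin> A"
      then have "\<sigma> x = \<tau> x" using False by blast
      moreover have "\<sigma>' x = \<tau>' x" using onC offC x \<open>\<sigma> x = \<tau> x\<close> by metis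
      ultimately show "\<sigma> x = \<tau> x \<and> \<sigma>' x = \<tau>' x" by blast
    qed
  qed
qed

lemma supp_sum:
  assumes "\<And>p. p \<in> F \<Longrightarrow> supported_on L d C (f p)"
  shows "supported_on L d C (\<lambda>\<sigma> \<tau>. \<Sum>p\<in>F. f p \<sigma> \<tau>)"
proof (rule suppI)
  fix \<sigma> \<tau> x assume "\<sigma> \<in> configs L d" "\<tau> \<in> configs L d" "x \<in> sites L" "x \<notin> C" "\<sigma> x \<noteq> \<tau> x"
  then show "(\<Sum>p\<in>F. f p \<sigma> \<tau>) = 0" using supp1[OF assms] by (intro sum.neutral) blast
next
  fix \<sigma> \<tau> \<sigma>' \<tau>'
  assume c: "\<sigma> \<in> configs L d" "\<tau> \<in> configs L d" "\<sigma>' \<in> configs L d" "\<tau>' \<in> configs L d"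
    and onC: "\<And>x. x \<in> C \<Longrightarrow> \<sigma> x = \<sigma>' x \<and> \<tau> x = \<tau>' x"
    and offC: "\<And>x. x \<in> sites L \<Longrightarrow> x \<notin> C \<Longrightarrow> \<sigma> x = \<tau> x \<and> \<sigma>' x = \<tau>' x"
  show "(\<Sum>p\<in>F. f p \<sigma> \<tau>) = (\<Sum>p\<in>F. f p \<sigma>' \<tau>')"
    by (rule sum.cong[OF refl], rule supp2[OF assms c onC offC])
qed

lemma supp_diff:
  assumes "supported_on L d C M" "supported_on L d C N"
  shows "supported_on L d C (\<lambda>\<sigma> \<tau>. M \<sigma> \<tau> - N \<sigma> \<tau>)"
proof (rule suppI)
  fix \<sigma> \<tau> x assume "\<sigma> \<in> configs L d" "\<tau> \<in> configs L d" "x \<in> sites L" "x \<notin> C" "\<sigma> x \<noteq> \<tau> x"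
  then show "M \<sigma> \<tau> - N \<sigma> \<tau> = 0" using supp1[OF assms(1)] supp1[OF assms(2)] by simp
next
  fix \<sigma> \<tau> \<sigma>' \<tau>'
  assume c: "\<sigma> \<in> configs L d" "\<tau> \<in> configs L d" "\<sigma>' \<in> configs L d" "\<tau>' \<in> configs L d"
    and onC: "\<And>x. x \<in> C \<Longrightarrow> \<sigma> x = \<sigma>' x \<and> \<tau> x = \<tau>' x"
    and offC: "\<And>x. x \<in> sites L \<Longrightarrow> x \<notin> C \<Longrightarrow> \<sigma> x = \<tau> x \<and> \<sigma>' x = \<tau>' x"
  show "M \<sigma> \<tau> - N \<sigma> \<tau> = M \<sigma>' \<tau>' - N \<sigma>' \<tau>'"
    using supp2[OF assms(1) c onC offC] supp2[OF assms(2) c onC offC] by simp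
qed

lemma supp_mult:
  assumes M: "supported_on L d C M" and N: "supported_on L d C N"
  shows "supported_on L d C (op_mult L d M N)"
proof (rule suppI)
  fix \<sigma> \<tau> x assume c: "\<sigma> \<in> configs L d" "\<tau> \<in> configs L d" and x: "x \<in> sites L" "x \<notin> C" "\<sigma> x \<noteq> \<tau> x"
  show "op_mult L d M N \<sigma> \<tau> = 0" unfolding op_mult_def
  proof (rule sum.neutral, rule ballI)
    fix \<rho> assume \<rho>: "\<rho> \<in> configs L d"
    show "M \<sigma> \<rho> * N \<rho> \<tau> = 0"
    proof (cases "\<rho> x = \<sigma> x")
      case True then show ?thesis using supp1[OF N \<rho> c(2) x(1,2)] x(3) by simp
    next
      case False then show ?thesis using supp1[OF M c(1) \<rho> x(1,2)] by simp
    qed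
  qed
next
  fix \<sigma> \<tau> \<sigma>' \<tau>'
  assume c: "\<sigma> \<in> configs L d" "\<tau> \<in> configs L d" "\<sigma>' \<in> configs L d" "\<tau>' \<in> configs L d"
    and onC: "\<And>x. x \<in> C \<Longrightarrow> \<sigma> x = \<sigma>' x \<and> \<tau> x = \<tau>' x"
    and offC: "\<And>x. x \<in> sites L \<Longrightarrow> x \<notin> C \<Longrightarrow> \<sigma> x = \<tau> x \<and> \<sigma>' x = \<tau>' x"
  let ?R1 = "{\<rho>\<in>configs L d. \<forall>x\<in>sites L - C. \<rho> x = \<sigma> x}"
  let ?R2 = "{\<rho>\<in>configs L d. \<forall>x\<in>sites L - C. \<rho> x = \<sigma>' x}"
  let ?h = "\<lambda>\<rho> x. if x \<in> C then \<rho> x else \<sigma>' x"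
  let ?k = "\<lambda>\<rho> x. if x \<in> C then \<rho> x else \<sigma> x"
  have "op_mult L d M N \<sigma> \<tau> = (\<Sum>\<rho>\<in>?R1. M \<sigma> \<rho> * N \<rho> \<tau>)"
    unfolding op_mult_def
  proof (rule sum.mono_neutral_right)
    show "\<forall>\<rho>\<in>configs L d - ?R1. M \<sigma> \<rho> * N \<rho> \<tau> = 0"
      using supp1[OF M c(1)] by fastforce
  qed auto
  also have "\<dots> = (\<Sum>\<rho>\<in>?R2. M \<sigma>' \<rho> * N \<rho> \<tau>')"
  proof (rule sum.reindex_bij_witness[of _ ?k ?h])
    fix \<rho> assume "\<rho> \<in> ?R1"
    then show "?k (?h \<rho>) = \<rho>"
      using c(1) by (intro ext, case_tac "x \<in> sites L") (auto simp: configs_def)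
  next
    fix \<rho> assume "\<rho> \<in> ?R2"
    then show "?h (?k \<rho>) = \<rho>"
      using c(3) by (intro ext, case_tac "x \<in> sites L") (auto simp: configs_def)
  next
    fix \<rho> assume "\<rho> \<in> ?R1"
    then show "?h \<rho> \<in> ?R2"
      using c(3) by (auto simp: configs_def)
  next
    fix \<rho> assume "\<rho> \<in> ?R2"
    then show "?k \<rho> \<in> ?R1"
      using c(1) by (auto simp: configs_def)
  next
    fix \<rho> assume r: "\<rho> \<in> ?R1"
    have hr: "?h \<rho> \<in> configs L d" using r c(3) by (auto simp: configs_def)
    have "M \<sigma> \<rho> = M \<sigma>' (?h \<rho>)"
      by (rule supp2[OF M c(1) _ c(3) hr]) (use r onC in auto)
    moreover have "N \<rho> \<tau> = N (?h \<rho>) \<tau>'"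
      by (rule supp2[OF N _ c(2) hr c(4)]) (use r onC offC in auto)
    ultimately show "M \<sigma>' (?h \<rho>) * N (?h \<rho>) \<tau>' = M \<sigma> \<rho> * N \<rho> \<tau>" by simp
  qed
  also have "\<dots> = op_mult L d M N \<sigma>' \<tau>'"
    unfolding op_mult_def
  proof (rule sum.mono_neutral_left)
    show "\<forall>\<rho>\<in>configs L d - ?R2. M \<sigma>' \<rho> * N \<rho> \<tau>' = 0"
      using supp1[OF M c(3)] by fastforce
  qed auto
  finally show "op_mult L d M N \<sigma> \<tau> = op_mult L d M N \<sigma>' \<tau>'" .
qed

lemma supp_comm:
  assumes "supported_on L d C M" "supported_on L d C N"
  shows "supported_on L d C (commutator L d M N)"
  unfolding commutator_def
  by (intro supp_diff supp_mult assms)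


lemma sum_single_nz:
  assumes "finite S" "a \<in> S" "\<And>x. x \<in> S \<Longrightarrow> x \<noteq> a \<Longrightarrow> f x = 0"
  shows "sum f S = f a"
proof -
  have "sum f S = f a + sum f (S - {a})" using assms by (simp add: sum.remove)
  also have "sum f (S - {a}) = 0" using assms by (intro sum.neutral) auto
  finally show ?thesis by simp
qed

lemma mult_disj:
  assumes M: "supported_on L d A M" and N: "supported_on L d B N" and AB: "A \<inter> B = {}"
    and c: "\<sigma> \<in> configs L d" "\<tau> \<in> configs L d"
  shows "op_mult L d M N \<sigma> \<tau> = M \<sigma> (\<lambda>x. if x \<in> A then \<tau> x else \<sigma> x) * N (\<lambda>x. if x \<in> A then \<tau> x else \<sigma> x) \<tau>"
  unfolding op_mult_def
proof (rule sum_single_nz)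
  let ?r = "\<lambda>x. if x \<in> A then \<tau> x else \<sigma> x"
  show "?r \<in> configs L d" using c by (auto simp: configs_def)
  fix \<rho> assume r: "\<rho> \<in> configs L d" "\<rho> \<noteq> ?r"
  then obtain x where x: "\<rho> x \<noteq> ?r x" by (meson ext)
  have xs: "x \<in> sites L"
  proof (rule ccontr)
    assume "x \<notin> sites L" then show False using x c r(1) by (cases x) (auto simp: configs_def split: if_splits)
  qed
  show "M \<sigma> \<rho> * N \<rho> \<tau> = 0"
  proof (cases "x \<in> A")
    case True
    then have "x \<notin> B" using AB by blast
    then show ?thesis using supp1[OF N r(1) c(2) xs] x True by simp
  next
    case False
    then show ?thesis using supp1[OF M c(1) r(1) xs] x by simp
  qed
qed simp

lemma comm_disj:
  assumes M: "supported_on L d A M" and N: "supported_on L d B N" and AB: "A \<inter> B = {}"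
    and c: "\<sigma> \<in> configs L d" "\<tau> \<in> configs L d"
  shows "commutator L d M N \<sigma> \<tau> = 0"
proof -
  let ?r1 = "\<lambda>x. if x \<in> A then \<tau> x else \<sigma> x"
  let ?r2 = "\<lambda>x. if x \<in> B then \<tau> x else \<sigma> x"
  have BA: "B \<inter> A = {}" using AB by blast
  have r1: "?r1 \<in> configs L d" and r2: "?r2 \<in> configs L d" using c by (auto simp: configs_def)
  have e1: "op_mult L d M N \<sigma> \<tau> = M \<sigma> ?r1 * N ?r1 \<tau>" by (rule mult_disj[OF M N AB c])
  have e2: "op_mult L d N M \<sigma> \<tau> = N \<sigma> ?r2 * M ?r2 \<tau>" by (rule mult_disj[OF N M BA c])
  have "M \<sigma> ?r1 * N ?r1 \<tau> = N \<sigma> ?r2 * M ?r2 \<tau>"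
  proof (cases "\<exists>x\<in>sites L. x \<notin> A \<and> x \<notin> B \<and> \<sigma> x \<noteq> \<tau> x")
    case True
    then obtain x where x: "x \<in> sites L" "x \<notin> A" "x \<notin> B" "\<sigma> x \<noteq> \<tau> x" by blast
    have "N ?r1 \<tau> = 0" by (rule supp1[OF N r1 c(2) x(1,3)]) (use x in simp)
    moreover have "M ?r2 \<tau> = 0" by (rule supp1[OF M r2 c(2) x(1,2)]) (use x in simp)
    ultimately show ?thesis by simp
  next
    case False
    have "M \<sigma> ?r1 = M ?r2 \<tau>"
      by (rule supp2[OF M c(1) r1 r2 c(2)]) (use AB False in auto)
    moreover have "N ?r1 \<tau> = N \<sigma> ?r2"
      by (rule supp2[OF N r1 c(2) c(1) r2]) (use AB False in auto)
    ultimately show ?thesis by simp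
  qed
  then show ?thesis unfolding commutator_def using e1 e2 by simp
qed


definition w :: "nat \<Rightarrow> nat \<Rightarrow> real" where
  "w r s = 1 / (real r ^ 4 * real s ^ 4)"

lemma inv_sq_sum: "n \<ge> 1 \<Longrightarrow> (\<Sum>r\<in>{1..n}. 1 / real r ^ 2) \<le> 2 - 1 / real n"
proof (induction n rule: dec_induct)
  case base then show ?case by simp
next
  case (step n)
  have "(\<Sum>r\<in>{1..Suc n}. 1 / real r ^ 2) = (\<Sum>r\<in>{1..n}. 1 / real r ^ 2) + 1 / real (Suc n) ^ 2"
    by simp
  also have "\<dots> \<le> 2 - 1 / real n + 1 / real (Suc n) ^ 2" using step by simp
  also have "\<dots> \<le> 2 - 1 / real (Suc n)"
  proof -
    have n: "real n \<ge> 1" using step by simp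
    have "1 / real (Suc n) ^ 2 \<le> 1 / (real n * real (Suc n))"
      using n by (intro divide_left_mono) (auto simp: power2_eq_square)
    also have "\<dots> = 1 / real n - 1 / real (Suc n)" using n by (simp add: field_simps)
    finally have "1 / real (Suc n) ^ 2 \<le> 1 / real n - 1 / real (Suc n)" .
    then show ?thesis by simp
  qed
  finally show ?case .
qed

lemma inv_pow_le: "r \<ge> 1 \<Longrightarrow> k \<ge> 2 \<Longrightarrow> 1 / real r ^ k \<le> 1 / real r ^ 2"
  by (intro divide_left_mono power_increasing) auto

lemma inv_pow_sum: "k \<ge> 2 \<Longrightarrow> (\<Sum>r\<in>{1..n}. 1 / real r ^ k) \<le> 2"
proof (cases "n \<ge> 1")
  case True
  assume k: "k \<ge> 2"
  have "(\<Sum>r\<in>{1..n}. 1 / real r ^ k) \<le> (\<Sum>r\<in>{1..n}. 1 / real r ^ 2)"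
    using k by (intro sum_mono inv_pow_le) auto
  also have "\<dots> \<le> 2 - 1 / real n" using inv_sq_sum True by blast
  also have "\<dots> \<le> 2" by simp
  finally show ?thesis .
qed simp

lemma pow4_le: fixes x y :: real assumes "0 \<le> x" "0 \<le> y"
  shows "(x + y) ^ 4 \<le> 8 * (x ^ 4 + y ^ 4)"
proof -
  have a0: "(x + y)^2 = 2 * (x^2 + y^2) - (x - y)^2" by algebra
  have a: "(x + y)^2 \<le> 2 * (x^2 + y^2)" using a0 by (smt (verit) zero_le_power2)
  have b: "(x^2 + y^2)^2 \<le> 2 * (x^4 + y^4)"
  proof -
    have "0 \<le> (x^2 - y^2)^2" by simp
    moreover have "(x^2 + y^2)^2 = 2 * (x^4 + y^4) - (x^2 - y^2)^2" by algebra
    ultimately show ?thesis by linarith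
  qed
  have "(x + y)^4 = ((x+y)^2)^2" by simp
  also have "\<dots> \<le> (2 * (x^2 + y^2))^2" using a by (intro power_mono) auto
  also have "\<dots> = 4 * (x^2+y^2)^2" by algebra
  also have "\<dots> \<le> 8 * (x^4 + y^4)" using b by simp
  finally show ?thesis .
qed

lemma w_bound: assumes "r \<ge> 1" "s \<ge> 1" "R \<le> r + s"
  shows "real R ^ 4 * w r s \<le> 8 / real r ^ 4 + 8 / real s ^ 4"
proof -
  have rp: "real r ^ 4 > 0" "real s ^ 4 > 0" using assms by auto
  have "real R ^ 4 \<le> (real r + real s) ^ 4" using assms by (intro power_mono) auto
  also have "\<dots> \<le> 8 * (real r ^ 4 + real s ^ 4)" by (rule pow4_le) auto
  finally have "real R ^ 4 \<le> 8 * (real r ^ 4 + real s ^ 4)" .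
  then have "real R ^ 4 * w r s \<le> 8 * (real r ^ 4 + real s ^ 4) * w r s"
    by (rule mult_right_mono) (simp add: w_def)
  also have "\<dots> = 8 / real r ^ 4 + 8 / real s ^ 4" using rp by (simp add: w_def field_simps)
  finally show ?thesis .
qed

lemma count_small: assumes "R \<ge> 1"
  shows "(\<Sum>r\<in>{1..R}. real R ^ 4 * w r (R + 1 - r)) \<le> 32"
proof -
  have "(\<Sum>r\<in>{1..R}. real R ^ 4 * w r (R + 1 - r)) \<le> (\<Sum>r\<in>{1..R}. 8 / real r ^ 4 + 8 / real (R + 1 - r) ^ 4)"
    by (intro sum_mono w_bound) auto
  also have "\<dots> = 8 * (\<Sum>r\<in>{1..R}. 1 / real r ^ 4) + 8 * (\<Sum>r\<in>{1..R}. 1 / real (R + 1 - r) ^ 4)"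
    by (simp add: sum.distrib sum_distrib_left)
  also have "(\<Sum>r\<in>{1..R}. 1 / real (R + 1 - r) ^ 4) = (\<Sum>r\<in>{1..R}. 1 / real r ^ 4)"
  proof -
    have "(\<Sum>r\<in>{1..R}. 1 / real r ^ 4) = (\<Sum>r\<in>{1..R}. 1 / real (R + 1 - r) ^ 4)"
      by (subst sum.atLeastAtMost_rev) simp
    then show ?thesis by simp
  qed
  also have "8 * (\<Sum>r\<in>{1..R}. 1 / real r ^ 4) + 8 * (\<Sum>r\<in>{1..R}. 1 / real r ^ 4) \<le> 8 * 2 + 8 * 2"
    using inv_pow_sum[of 4 R] by simp
  finally show ?thesis by simp
qed

lemma card_big: "r \<le> L \<Longrightarrow> card {s\<in>{1..L}. L < r + s} = r"
proof -
  assume "r \<le> L"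
  then have "{s\<in>{1..L}. L < r + s} = {L + 1 - r..L}" by auto
  then show ?thesis using \<open>r \<le> L\<close> by simp
qed

lemma count_big:
  "(\<Sum>r\<in>{1..L}. \<Sum>s\<in>{1..L}. if L < r + s then real L ^ 4 * w r s else 0) \<le> 32"
proof -
  let ?f = "\<lambda>r s. if L < r + s then 8 / real r ^ 4 else (0::real)"
  have "(\<Sum>r\<in>{1..L}. \<Sum>s\<in>{1..L}. if L < r + s then real L ^ 4 * w r s else 0)
     \<le> (\<Sum>r\<in>{1..L}. \<Sum>s\<in>{1..L}. ?f r s + ?f s r)"
    by (intro sum_mono) (auto simp: add.commute intro!: w_bound)
  also have "\<dots> = (\<Sum>r\<in>{1..L}. \<Sum>s\<in>{1..L}. ?f r s) + (\<Sum>r\<in>{1..L}. \<Sum>s\<in>{1..L}. ?f s r)"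
    by (simp add: sum.distrib)
  also have "(\<Sum>r\<in>{1..L}. \<Sum>s\<in>{1..L}. ?f s r) = (\<Sum>r\<in>{1..L}. \<Sum>s\<in>{1..L}. ?f r s)"
    by (rule sum.swap)
  also have "(\<Sum>r\<in>{1..L}. \<Sum>s\<in>{1..L}. ?f r s) = (\<Sum>r\<in>{1..L}. 8 / real r ^ 3)"
  proof (rule sum.cong[OF refl])
    fix r assume r: "r \<in> {1..L}"
    have "(\<Sum>s\<in>{1..L}. ?f r s) = (\<Sum>s\<in>{s\<in>{1..L}. L < r + s}. 8 / real r ^ 4)"
      by (subst sum.inter_filter) auto
    also have "\<dots> = real r * (8 / real r ^ 4)" using r card_big[of r L] by simp
    also have "\<dots> = 8 / real r ^ 3" using r by (simp add: field_simps power_eq_if)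
    finally show "(\<Sum>s\<in>{1..L}. ?f r s) = 8 / real r ^ 3" .
  qed
  also have "(\<Sum>r\<in>{1..L}. 8 / real r ^ 3) = 8 * (\<Sum>r\<in>{1..L}. 1 / real r ^ 3)"
    by (simp add: sum_distrib_left)
  also have "8 * (\<Sum>r\<in>{1..L}. 1 / real r ^ 3) + 8 * (\<Sum>r\<in>{1..L}. 1 / real r ^ 3) \<le> 8 * 2 + 8 * 2"
    using inv_pow_sum[of 3 L] by simp
  finally show ?thesis by simp
qed


definition shift :: "nat \<Rightarrow> site \<Rightarrow> site \<Rightarrow> site" where
  "shift L c u = ((fst c + fst u) mod L, (snd c + snd u) mod L)"

definition arc :: "nat \<Rightarrow> nat \<Rightarrow> nat \<Rightarrow> nat set" where
  "arc L r x = {(x + i) mod L | i. i < r}"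

lemma block_arc: "block L r x = arc L r (fst x) \<times> arc L r (snd x)"
  unfolding block_def arc_def by auto

lemma block_sub_sites: "L > 0 \<Longrightarrow> block L r x \<subseteq> sites L"
  unfolding block_def sites_def by auto

lemma finite_blocks[simp]: "finite (blocks L r)"
  unfolding blocks_def sites_def by simp

lemma blocks_sub_sites: "L > 0 \<Longrightarrow> A \<in> blocks L r \<Longrightarrow> A \<subseteq> sites L"
proof -
  assume "L > 0" "A \<in> blocks L r"
  then obtain a where "A = block L r a" by (auto simp: blocks_def split: if_splits)
  then show ?thesis using block_sub_sites \<open>L > 0\<close> by blast
qed

lemma arc_full: assumes "L > 0" "x < L" shows "arc L L x = {0..<L}"
proof
  show "arc L L x \<subseteq> {0..<L}" using assms by (auto simp: arc_def)
  show "{0..<L} \<subseteq> arc L L x"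
  proof
    fix y assume y: "y \<in> {0..<L}"
    have "(x + (y + L - x) mod L) mod L = (x + (y + L - x)) mod L" by (simp add: mod_add_right_eq)
    also have "\<dots> = (y + L) mod L" using assms by simp
    also have "\<dots> = y" using y by simp
    finally show "y \<in> arc L L x" unfolding arc_def using assms(1)
      by (metis (mono_tags, lifting) mem_Collect_eq mod_less_divisor)
  qed
qed

lemma block_full: "L > 0 \<Longrightarrow> x \<in> sites L \<Longrightarrow> block L L x = sites L"
  unfolding block_arc by (auto simp: arc_full sites_def)

lemma sites_in_blocks: "L > 0 \<Longrightarrow> sites L \<in> blocks L L"
proof -
  assume L: "L > 0"
  have "(0,0) \<in> sites L" using L by (simp add: sites_def)
  then show ?thesis unfolding blocks_def using block_full[OF L] by (metis image_eqI order_refl)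
qed

lemma blocks_L: "L > 0 \<Longrightarrow> C \<in> blocks L L \<Longrightarrow> C = sites L"
  unfolding blocks_def using block_full by auto

lemma blocks_le: "C \<in> blocks L R \<Longrightarrow> R \<le> L"
  unfolding blocks_def by (auto split: if_splits)

lemma block_shift_sub:
  assumes "fst u + r \<le> R" "snd u + r \<le> R"
  shows "block L r (shift L c u) \<subseteq> block L R c"
proof
  fix y assume "y \<in> block L r (shift L c u)"
  then obtain i j where ij: "i < r" "j < r"
    "y = (((fst c + fst u) mod L + i) mod L, ((snd c + snd u) mod L + j) mod L)"
    unfolding block_def shift_def by auto
  then have "y = ((fst c + (fst u + i)) mod L, (snd c + (snd u + j)) mod L)"
    by (simp add: mod_add_left_eq add.assoc)
  moreover have "fst u + i < R" "snd u + j < R" using ij assms by auto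
  ultimately show "y \<in> block L R c" unfolding block_def by blast
qed

lemma arc_uniq:
  assumes R: "1 \<le> R" "R < L" and xy: "x < L" "y < L" and eq: "arc L R x = arc L R y"
  shows "x = y"
proof -
  have "y \<in> arc L R y" using R xy by (auto simp: arc_def intro!: exI[of _ 0])
  then have "y \<in> arc L R x" using eq by simp
  then obtain i where i: "i < R" "y = (x + i) mod L" by (auto simp: arc_def)
  show ?thesis
  proof (cases "i = 0")
    case True then show ?thesis using i xy by simp
  next
    case False
    have "(x + (i - 1)) mod L \<in> arc L R x" using i by (auto simp: arc_def)
    then have "(x + (i - 1)) mod L \<in> arc L R y" using eq by simp
    then obtain k where k: "k < R" "(x + (i - 1)) mod L = (y + k) mod L" by (auto simp: arc_def)
    have "(y + k) mod L = (x + i + k) mod L" using i by (simp add: mod_add_left_eq)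
    then have "(x + (i - 1)) mod L = (x + (i - 1) + (k + 1)) mod L" using k False by simp
    then have "L dvd (x + (i - 1) + (k + 1)) - (x + (i - 1))"
      by (metis le_add1 mod_eq_dvd_iff_nat)
    then have "L dvd (k + 1)" by simp
    moreover have "0 < k + 1" "k + 1 < L" using k R by auto
    ultimately show ?thesis by (meson nat_dvd_not_less)
  qed
qed

lemma block_uniq:
  assumes R: "1 \<le> R" "R < L" and c: "c \<in> sites L" "c' \<in> sites L" and eq: "block L R c = block L R c'"
  shows "c = c'"
proof -
  have ne: "arc L R x \<noteq> {}" for x
  proof -
    have "(x + 0) mod L \<in> arc L R x" unfolding arc_def mem_Collect_eq using R by (intro exI[of _ 0]) simp
    then show ?thesis by blast
  qed
  have "arc L R (fst c) \<times> arc L R (snd c) = arc L R (fst c') \<times> arc L R (snd c')"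
    using eq by (simp add: block_arc)
  then have "arc L R (fst c) = arc L R (fst c')" "arc L R (snd c) = arc L R (snd c')"
    using ne by (auto simp: times_eq_iff)
  then have "fst c = fst c'" "snd c = snd c'"
    using c R by (auto simp: sites_def intro: arc_uniq)
  then show ?thesis by (simp add: prod_eq_iff)
qed

lemma overlap1:
  fixes a b i j L :: nat
  assumes "0 < L" "a < L" "b < L" "j \<le> L" "(a + i) mod L = (b + j) mod L"
  shows "((a + L - j) mod L + j) mod L = a" "((a + L - j) mod L + i) mod L = b"
proof -
  have "((a + L - j) mod L + j) mod L = (a + L - j + j) mod L" by (rule mod_add_left_eq)
  also have "\<dots> = (a + L) mod L" using assms by simp
  also have "\<dots> = a" using assms by simp
  finally show "((a + L - j) mod L + j) mod L = a" .
  have "((a + L - j) mod L + i) mod L = (a + L - j + i) mod L" by (rule mod_add_left_eq)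
  also have "\<dots> = (a + i + (L - j)) mod L" using assms by (simp add: algebra_simps)
  also have "\<dots> = ((a + i) mod L + (L - j)) mod L" by (simp add: mod_add_left_eq)
  also have "\<dots> = ((b + j) mod L + (L - j)) mod L" using assms by simp
  also have "\<dots> = (b + j + (L - j)) mod L" by (rule mod_add_left_eq)
  also have "\<dots> = (b + L) mod L" using assms by simp
  also have "\<dots> = b" using assms by simp
  finally show "((a + L - j) mod L + i) mod L = b" .
qed

definition good :: "nat \<Rightarrow> nat \<Rightarrow> site set \<Rightarrow> nat \<Rightarrow> site set \<Rightarrow> site \<times> site \<times> site \<Rightarrow> bool" where
  "good L r A s B t \<longleftrightarrow> (case t of (c, u, v) \<Rightarrow> c \<in> sites L \<and> fst u < s \<and> snd u < s \<and> fst v < r \<and> snd v < r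
      \<and> A = block L r (shift L c u) \<and> B = block L s (shift L c v))"

lemma overlap_exists:
  assumes L: "0 < L" and rs: "r \<le> L" "s \<le> L" and A: "A \<in> blocks L r" and B: "B \<in> blocks L s"
    and ov: "A \<inter> B \<noteq> {}"
  shows "\<exists>t. good L r A s B t"
proof -
  obtain a where a: "a \<in> sites L" "A = block L r a" using A rs unfolding blocks_def by auto
  obtain b where b: "b \<in> sites L" "B = block L s b" using B rs unfolding blocks_def by auto
  obtain x where "x \<in> A" "x \<in> B" using ov by blast
  then obtain i1 i2 j1 j2 where ij: "i1 < r" "i2 < r" "j1 < s" "j2 < s"
    "(fst a + i1) mod L = (fst b + j1) mod L" "(snd a + i2) mod L = (snd b + j2) mod L"
    using a b unfolding block_def by auto
  have a1: "fst a < L" "snd a < L" "fst b < L" "snd b < L" using a b by (auto simp: sites_def)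
  define c where "c = ((fst a + L - j1) mod L, (snd a + L - j2) mod L)"
  have c: "c \<in> sites L" using L by (simp add: c_def sites_def)
  note o1 = overlap1[OF L a1(1) a1(3) _ ij(5)] and o2 = overlap1[OF L a1(2) a1(4) _ ij(6)]
  have "shift L c (j1, j2) = a" using o1(1) o2(1) ij rs by (simp add: shift_def c_def prod_eq_iff)
  moreover have "shift L c (i1, i2) = b" using o1(2) o2(2) ij rs by (simp add: shift_def c_def prod_eq_iff)
  ultimately have "good L r A s B (c, (j1, j2), (i1, i2))"
    unfolding good_def using ij c a b by simp
  then show ?thesis by blast
qed


definition Idx :: "nat \<Rightarrow> (nat \<times> site set) set" where
  "Idx L = (SIGMA r:{1..L}. blocks L r)"

definition trip :: "nat \<Rightarrow> nat \<Rightarrow> site set \<Rightarrow> nat \<Rightarrow> site set \<Rightarrow> site \<times> site \<times> site" where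
  "trip L r A s B = (SOME t. good L r A s B t)"

definition gmap :: "nat \<Rightarrow> (nat \<times> site set) \<times> (nat \<times> site set) \<Rightarrow> nat \<times> site set" where
  "gmap L p = (case p of ((r,A),(s,B)) \<Rightarrow> if r + s \<le> L then (r+s-1, block L (r+s-1) (fst (trip L r A s B))) else (L, sites L))"

definition ov :: "(nat \<times> site set) \<times> (nat \<times> site set) \<Rightarrow> bool" where
  "ov p = (case p of ((r,A),(s,B)) \<Rightarrow> A \<inter> B \<noteq> {})"

definition pre :: "nat \<Rightarrow> nat \<Rightarrow> site set \<Rightarrow> ((nat \<times> site set) \<times> (nat \<times> site set)) set" where
  "pre L R C = {p \<in> Idx L \<times> Idx L. ov p \<and> gmap L p = (R,C)}"

definition anc :: "nat \<Rightarrow> nat \<Rightarrow> site set \<Rightarrow> site" where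
  "anc L r A = (SOME a. a \<in> sites L \<and> A = block L r a)"

lemma finite_Idx[simp]: "finite (Idx L)"
  unfolding Idx_def by auto

lemma Idx_iff: "(r, A) \<in> Idx L \<longleftrightarrow> r \<in> {1..L} \<and> A \<in> blocks L r"
  unfolding Idx_def by auto

lemma anc: "r \<le> L \<Longrightarrow> A \<in> blocks L r \<Longrightarrow> anc L r A \<in> sites L \<and> A = block L r (anc L r A)"
  unfolding anc_def by (rule someI_ex) (auto simp: blocks_def)

lemma trip_good:
  assumes "((r,A),(s,B)) \<in> Idx L \<times> Idx L" "A \<inter> B \<noteq> {}"
  shows "good L r A s B (trip L r A s B)"
  unfolding trip_def
  by (rule someI_ex, rule overlap_exists) (use assms in \<open>auto simp: Idx_iff\<close>)

lemma trip_props: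
  assumes "((r,A),(s,B)) \<in> Idx L \<times> Idx L" "A \<inter> B \<noteq> {}" "trip L r A s B = (c, u, v)"
  shows "c \<in> sites L" "fst u < s" "snd u < s" "fst v < r" "snd v < r"
    "A = block L r (shift L c u)" "B = block L s (shift L c v)"
  using trip_good[OF assms(1,2)] assms(3) unfolding good_def by auto

lemma pre_elim:
  assumes p: "((r,A),(s,B)) \<in> pre L R C"
  shows "r \<in> {1..L} \<and> s \<in> {1..L} \<and> A \<in> blocks L r \<and> B \<in> blocks L s \<and> A \<inter> B \<noteq> {} \<and>
    (if r + s \<le> L then R = r + s - 1 \<and> C = block L R (fst (trip L r A s B)) else R = L \<and> C = sites L)"
  using p unfolding pre_def ov_def gmap_def Idx_def by (auto split: if_splits)

lemma pre_sub:
  assumes p: "((r,A),(s,B)) \<in> pre L R C"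
  shows "A \<subseteq> C \<and> B \<subseteq> C"
proof -
  note e = pre_elim[OF p]
  have idx: "((r,A),(s,B)) \<in> Idx L \<times> Idx L" using e by (simp add: Idx_iff)
  show ?thesis
  proof (cases "r + s \<le> L")
    case True
    obtain c u v where t: "trip L r A s B = (c, u, v)" by (metis prod_cases3)
    note tp = trip_props[OF idx _ t]
    have R: "R = r + s - 1" and C: "C = block L R c" using e True t by auto
    have "A \<subseteq> C" unfolding C using tp(2,3,6) e R by (simp add: block_shift_sub)
    moreover have "B \<subseteq> C" unfolding C using tp(4,5,7) e R by (simp add: block_shift_sub)
    ultimately show ?thesis by blast
  next
    case False
    then have "C = sites L" using e by simp
    moreover have "L > 0" using e by auto
    ultimately show ?thesis using e blocks_sub_sites by blast
  qed
qed

lemma pre_R: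
  assumes p: "((r,A),(s,B)) \<in> pre L R C"
  shows "1 \<le> R \<and> R \<le> r + s"
  using pre_elim[OF p] by (auto split: if_splits)

lemma finite_pre[simp]: "finite (pre L R C)"
  unfolding pre_def by auto


lemma count_lt:
  assumes R: "1 \<le> R" "R < L" and C: "C \<in> blocks L R"
  shows "(\<Sum>p\<in>pre L R C. w (fst (fst p)) (fst (snd p))) \<le> 32"
proof -
  obtain c0 where c0: "c0 \<in> sites L" "C = block L R c0" using C R unfolding blocks_def by auto
  define Off where "Off = {0..<R} \<times> {0..<R}"
  define \<phi> where "\<phi> = (\<lambda>p::(nat \<times> site set) \<times> (nat \<times> site set).
      (fst (fst p), fst (snd (trip L (fst (fst p)) (snd (fst p)) (fst (snd p)) (snd (snd p)))),
                    snd (snd (trip L (fst (fst p)) (snd (fst p)) (fst (snd p)) (snd (snd p))))))"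
  define w' where "w' = (\<lambda>z::nat \<times> site \<times> site. w (fst z) (R + 1 - fst z))"
  have key: "\<And>r A s B. ((r,A),(s,B)) \<in> pre L R C \<Longrightarrow>
     R = r + s - 1 \<and> s = R + 1 - r \<and> 1 \<le> r \<and> 1 \<le> s \<and> r \<le> R \<and>
     fst (trip L r A s B) = c0 \<and>
     A = block L r (shift L c0 (fst (snd (trip L r A s B)))) \<and>
     B = block L s (shift L c0 (snd (snd (trip L r A s B)))) \<and>
     fst (snd (trip L r A s B)) \<in> Off \<and> snd (snd (trip L r A s B)) \<in> Off"
  proof -
    fix r A s B assume p: "((r,A),(s,B)) \<in> pre L R C"
    note e = pre_elim[OF p]
    have idx: "((r,A),(s,B)) \<in> Idx L \<times> Idx L" using e by (simp add: Idx_iff)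
    obtain c u v where t: "trip L r A s B = (c, u, v)" by (metis prod_cases3)
    have ovAB: "A \<inter> B \<noteq> {}" using e by blast
    note tp = trip_props[OF idx ovAB t]
    have rs: "r + s \<le> L" using e R by (auto split: if_splits)
    then have RR: "R = r + s - 1" and CC: "C = block L R c" using e t by auto
    have cc0: "c = c0" using block_uniq[OF R tp(1) c0(1)] CC c0 e by auto
    have "u \<in> Off" "v \<in> Off" using tp(2-5) RR e unfolding Off_def by (auto simp: mem_Times_iff)
    show "R = r + s - 1 \<and> s = R + 1 - r \<and> 1 \<le> r \<and> 1 \<le> s \<and> r \<le> R \<and>
     fst (trip L r A s B) = c0 \<and>
     A = block L r (shift L c0 (fst (snd (trip L r A s B)))) \<and>
     B = block L s (shift L c0 (snd (snd (trip L r A s B)))) \<and>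
     fst (snd (trip L r A s B)) \<in> Off \<and> snd (snd (trip L r A s B)) \<in> Off"
    proof -
      have r1: "1 \<le> r" "1 \<le> s" using e by auto
      have "c = c0" by (rule cc0)
      then show ?thesis unfolding t using RR r1 tp(6,7) \<open>u \<in> Off\<close> \<open>v \<in> Off\<close>
        by simp
    qed
  qed
  have inj: "inj_on \<phi> (pre L R C)"
  proof (rule inj_onI)
    fix p q assume p: "p \<in> pre L R C" and q: "q \<in> pre L R C" and eq: "\<phi> p = \<phi> q"
    obtain r A s B where pp: "p = ((r,A),(s,B))" by (metis prod.collapse)
    obtain r' A' s' B' where qq: "q = ((r',A'),(s',B'))" by (metis prod.collapse)
    note kp = key[OF p[unfolded pp]] and kq = key[OF q[unfolded qq]]
    have rr: "r = r'" using eq unfolding pp qq \<phi>_def by simp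
    have s1: "s = R + 1 - r" using kp by blast
    have s2: "s' = R + 1 - r'" using kq by blast
    have ss: "s = s'" using s1 s2 rr by simp
    have u: "fst (snd (trip L r A s B)) = fst (snd (trip L r' A' s' B'))"
      and v: "snd (snd (trip L r A s B)) = snd (snd (trip L r' A' s' B'))"
      using eq unfolding pp qq \<phi>_def by (simp_all only: prod.inject fst_conv snd_conv) auto
    have A: "A = block L r (shift L c0 (fst (snd (trip L r A s B))))" using kp by blast
    have A': "A' = block L r' (shift L c0 (fst (snd (trip L r' A' s' B'))))" using kq by blast
    have B: "B = block L s (shift L c0 (snd (snd (trip L r A s B))))" using kp by blast
    have B': "B' = block L s' (shift L c0 (snd (snd (trip L r' A' s' B'))))" using kq by blast
    have "A = A'"
    proof -
      have "A = block L r (shift L c0 (fst (snd (trip L r A s B))))" by (rule A)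
      also have "\<dots> = block L r' (shift L c0 (fst (snd (trip L r' A' s' B'))))" using u rr by simp
      also have "\<dots> = A'" by (rule A'[symmetric])
      finally show ?thesis .
    qed
    moreover have "B = B'"
    proof -
      have "B = block L s (shift L c0 (snd (snd (trip L r A s B))))" by (rule B)
      also have "\<dots> = block L s' (shift L c0 (snd (snd (trip L r' A' s' B'))))" using v ss by simp
      also have "\<dots> = B'" by (rule B'[symmetric])
      finally show ?thesis .
    qed
    moreover note rr ss
    ultimately show "p = q" using pp qq by simp
  qed
  have img: "\<phi> ` pre L R C \<subseteq> {1..R} \<times> Off \<times> Off"
  proof
    fix z assume "z \<in> \<phi> ` pre L R C"
    then obtain p where p: "p \<in> pre L R C" "z = \<phi> p" by blast
    obtain r A s B where pp: "p = ((r,A),(s,B))" by (metis prod.collapse)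
    have k: "1 \<le> r" "r \<le> R" "fst (snd (trip L r A s B)) \<in> Off" "snd (snd (trip L r A s B)) \<in> Off"
      using key[OF p(1)[unfolded pp]] by blast+
    show "z \<in> {1..R} \<times> Off \<times> Off" using k p(2) pp by (simp add: \<phi>_def mem_Times_iff)
  qed
  have "(\<Sum>p\<in>pre L R C. w (fst (fst p)) (fst (snd p))) = (\<Sum>p\<in>pre L R C. w' (\<phi> p))"
  proof (rule sum.cong[OF refl])
    fix p assume p: "p \<in> pre L R C"
    obtain r A s B where pp: "p = ((r,A),(s,B))" by (metis prod.collapse)
    show "w (fst (fst p)) (fst (snd p)) = w' (\<phi> p)"
    proof -
      have "s = R + 1 - r" using key[OF p[unfolded pp]] by blast
      then show ?thesis using pp by (simp add: w'_def \<phi>_def)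
    qed
  qed
  also have "\<dots> = (\<Sum>z\<in>\<phi> ` pre L R C. w' z)" using inj by (simp add: sum.reindex)
  also have "\<dots> \<le> (\<Sum>z\<in>{1..R} \<times> Off \<times> Off. w' z)"
    by (rule sum_mono2) (use img in \<open>auto simp: Off_def w'_def w_def\<close>)
  also have "\<dots> = (\<Sum>r\<in>{1..R}. \<Sum>y\<in>Off \<times> Off. w' (r, y))"
    by (simp add: sum.cartesian_product)
  also have "\<dots> = (\<Sum>r\<in>{1..R}. real R ^ 4 * w r (R + 1 - r))"
  proof (rule sum.cong[OF refl])
    fix r
    have "card (Off \<times> Off) = R ^ 4" by (simp add: Off_def card_cartesian_product power_def)
    then show "(\<Sum>y\<in>Off \<times> Off. w' (r, y)) = real R ^ 4 * w r (R + 1 - r)"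
      by (simp add: w'_def)
  qed
  also have "\<dots> \<le> 32" using count_small R by simp
  finally show ?thesis .
qed


lemma count_eq:
  assumes L: "1 \<le> L" and C: "C \<in> blocks L L"
  shows "(\<Sum>p\<in>pre L L C. w (fst (fst p)) (fst (snd p))) \<le> 32"
proof -
  define \<phi> where "\<phi> = (\<lambda>p::(nat \<times> site set) \<times> (nat \<times> site set).
      (fst (fst p), fst (snd p), anc L (fst (fst p)) (snd (fst p)), anc L (fst (snd p)) (snd (snd p))))"
  define w' where "w' = (\<lambda>z::nat \<times> nat \<times> site \<times> site. if L < fst z + fst (snd z) then w (fst z) (fst (snd z)) else 0)"
  have key: "\<And>r A s B. ((r,A),(s,B)) \<in> pre L L C \<Longrightarrow>
     L < r + s \<and> r \<in> {1..L} \<and> s \<in> {1..L} \<and> anc L r A \<in> sites L \<and> anc L s B \<in> sites L \<and>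
     A = block L r (anc L r A) \<and> B = block L s (anc L s B)"
  proof -
    fix r A s B assume p: "((r,A),(s,B)) \<in> pre L L C"
    note e = pre_elim[OF p]
    have "L < r + s" using e by (auto split: if_splits)
    moreover have "r \<in> {1..L}" "s \<in> {1..L}" using e by auto
    moreover have "anc L r A \<in> sites L \<and> A = block L r (anc L r A)" using e by (intro anc) auto
    moreover have "anc L s B \<in> sites L \<and> B = block L s (anc L s B)" using e by (intro anc) auto
    ultimately show "L < r + s \<and> r \<in> {1..L} \<and> s \<in> {1..L} \<and> anc L r A \<in> sites L \<and> anc L s B \<in> sites L \<and>
     A = block L r (anc L r A) \<and> B = block L s (anc L s B)" by blast
  qed
  have inj: "inj_on \<phi> (pre L L C)"
  proof (rule inj_onI)
    fix p q assume p: "p \<in> pre L L C" and q: "q \<in> pre L L C" and eq: "\<phi> p = \<phi> q"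
    obtain r A s B where pp: "p = ((r,A),(s,B))" by (metis prod.collapse)
    obtain r' A' s' B' where qq: "q = ((r',A'),(s',B'))" by (metis prod.collapse)
    have rr: "r = r'" and ss: "s = s'" and u: "anc L r A = anc L r' A'" and v: "anc L s B = anc L s' B'"
      using eq unfolding pp qq \<phi>_def by (simp_all only: prod.inject fst_conv snd_conv) auto
    have A: "A = block L r (anc L r A)" using key[OF p[unfolded pp]] by blast
    have A': "A' = block L r' (anc L r' A')" using key[OF q[unfolded qq]] by blast
    have B: "B = block L s (anc L s B)" using key[OF p[unfolded pp]] by blast
    have B': "B' = block L s' (anc L s' B')" using key[OF q[unfolded qq]] by blast
    have "A = A'"
    proof -
      have "A = block L r (anc L r A)" by (rule A)
      also have "\<dots> = block L r' (anc L r' A')" using u rr by simp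
      also have "\<dots> = A'" by (rule A'[symmetric])
      finally show ?thesis .
    qed
    moreover have "B = B'"
    proof -
      have "B = block L s (anc L s B)" by (rule B)
      also have "\<dots> = block L s' (anc L s' B')" using v ss by simp
      also have "\<dots> = B'" by (rule B'[symmetric])
      finally show ?thesis .
    qed
    ultimately show "p = q" using pp qq rr ss by simp
  qed
  have img: "\<phi> ` pre L L C \<subseteq> {1..L} \<times> {1..L} \<times> sites L \<times> sites L"
  proof
    fix z assume "z \<in> \<phi> ` pre L L C"
    then obtain p where p: "p \<in> pre L L C" "z = \<phi> p" by blast
    obtain r A s B where pp: "p = ((r,A),(s,B))" by (metis prod.collapse)
    have k: "r \<in> {1..L}" "s \<in> {1..L}" "anc L r A \<in> sites L" "anc L s B \<in> sites L"
      using key[OF p(1)[unfolded pp]] by blast+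
    show "z \<in> {1..L} \<times> {1..L} \<times> sites L \<times> sites L" using k p(2) pp by (simp add: \<phi>_def mem_Times_iff)
  qed
  have "(\<Sum>p\<in>pre L L C. w (fst (fst p)) (fst (snd p))) = (\<Sum>p\<in>pre L L C. w' (\<phi> p))"
  proof (rule sum.cong[OF refl])
    fix p assume p: "p \<in> pre L L C"
    obtain r A s B where pp: "p = ((r,A),(s,B))" by (metis prod.collapse)
    have "L < r + s" using key[OF p[unfolded pp]] by blast
    then show "w (fst (fst p)) (fst (snd p)) = w' (\<phi> p)" using pp by (simp add: w'_def \<phi>_def)
  qed
  also have "\<dots> = (\<Sum>z\<in>\<phi> ` pre L L C. w' z)" using inj by (simp add: sum.reindex)
  also have "\<dots> \<le> (\<Sum>z\<in>{1..L} \<times> {1..L} \<times> sites L \<times> sites L. w' z)"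
    by (rule sum_mono2) (use img in \<open>auto simp: sites_def w'_def w_def\<close>)
  also have "\<dots> = (\<Sum>r\<in>{1..L}. \<Sum>s\<in>{1..L}. \<Sum>y\<in>sites L \<times> sites L. w' (r, s, y))"
    by (simp add: sum.cartesian_product)
  also have "\<dots> = (\<Sum>r\<in>{1..L}. \<Sum>s\<in>{1..L}. if L < r + s then real L ^ 4 * w r s else 0)"
  proof (intro sum.cong refl)
    fix r s
    have "card (sites L \<times> sites L) = L ^ 4" by (simp add: sites_def card_cartesian_product power_def)
    then show "(\<Sum>y\<in>sites L \<times> sites L. w' (r, s, y)) = (if L < r + s then real L ^ 4 * w r s else 0)"
      by (simp add: w'_def)
  qed
  also have "\<dots> \<le> 32" by (rule count_big)
  finally show ?thesis .
qed

lemma count_all: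
  assumes R: "1 \<le> R" and C: "C \<in> blocks L R"
  shows "(\<Sum>p\<in>pre L R C. w (fst (fst p)) (fst (snd p))) \<le> 32"
proof -
  have "R \<le> L" using C by (rule blocks_le)
  then show ?thesis
  proof (cases "R < L")
    case True then show ?thesis using count_lt R C by blast
  next
    case False
    then have "R = L" using \<open>R \<le> L\<close> by simp
    then show ?thesis using count_eq R C by simp
  qed
qed


lemma decomp_sum:
  assumes "local_decomp L d W V" "\<rho> \<in> configs L d" "\<tau> \<in> configs L d"
  shows "V \<rho> \<tau> = (\<Sum>q\<in>Idx L. W (fst q) (snd q) \<rho> \<tau>)"
proof -
  have "V \<rho> \<tau> = (\<Sum>r\<in>{1..L}. \<Sum>A\<in>blocks L r. W r A \<rho> \<tau>)"
    using assms unfolding local_decomp_def by blast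
  also have "\<dots> = (\<Sum>(r,A)\<in>Idx L. W r A \<rho> \<tau>)"
    unfolding Idx_def by (rule sum.Sigma) auto
  also have "\<dots> = (\<Sum>q\<in>Idx L. W (fst q) (snd q) \<rho> \<tau>)"
    by (simp add: case_prod_beta)
  finally show ?thesis .
qed

lemma mult_expand:
  assumes S: "local_decomp L d W1 S" and V: "local_decomp L d W2 V"
    and c: "\<sigma> \<in> configs L d" "\<tau> \<in> configs L d"
  shows "op_mult L d S V \<sigma> \<tau> = (\<Sum>q1\<in>Idx L. \<Sum>q2\<in>Idx L.
            op_mult L d (W1 (fst q1) (snd q1)) (W2 (fst q2) (snd q2)) \<sigma> \<tau>)"
proof -
  have "op_mult L d S V \<sigma> \<tau> = (\<Sum>\<rho>\<in>configs L d. (\<Sum>q1\<in>Idx L. W1 (fst q1) (snd q1) \<sigma> \<rho>) * (\<Sum>q2\<in>Idx L. W2 (fst q2) (snd q2) \<rho> \<tau>))"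
    unfolding op_mult_def
    by (rule sum.cong[OF refl]) (simp add: decomp_sum[OF S c(1)] decomp_sum[OF V _ c(2)])
  also have "\<dots> = (\<Sum>\<rho>\<in>configs L d. \<Sum>q1\<in>Idx L. \<Sum>q2\<in>Idx L. W1 (fst q1) (snd q1) \<sigma> \<rho> * W2 (fst q2) (snd q2) \<rho> \<tau>)"
    by (simp add: sum_product)
  also have "\<dots> = (\<Sum>q1\<in>Idx L. \<Sum>\<rho>\<in>configs L d. \<Sum>q2\<in>Idx L. W1 (fst q1) (snd q1) \<sigma> \<rho> * W2 (fst q2) (snd q2) \<rho> \<tau>)"
    by (rule sum.swap)
  also have "\<dots> = (\<Sum>q1\<in>Idx L. \<Sum>q2\<in>Idx L. \<Sum>\<rho>\<in>configs L d. W1 (fst q1) (snd q1) \<sigma> \<rho> * W2 (fst q2) (snd q2) \<rho> \<tau>)"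
    by (rule sum.cong[OF refl], rule sum.swap)
  finally show ?thesis unfolding op_mult_def .
qed

definition cm :: "nat \<Rightarrow> (site \<Rightarrow> nat) \<Rightarrow> (nat \<Rightarrow> site set \<Rightarrow> op) \<Rightarrow> (nat \<Rightarrow> site set \<Rightarrow> op)
    \<Rightarrow> (nat \<times> site set) \<times> (nat \<times> site set) \<Rightarrow> op" where
  "cm L d W1 W2 p = commutator L d (W1 (fst (fst p)) (snd (fst p))) (W2 (fst (snd p)) (snd (snd p)))"

definition Wc :: "nat \<Rightarrow> (site \<Rightarrow> nat) \<Rightarrow> (nat \<Rightarrow> site set \<Rightarrow> op) \<Rightarrow> (nat \<Rightarrow> site set \<Rightarrow> op)
    \<Rightarrow> nat \<Rightarrow> site set \<Rightarrow> op" where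
  "Wc L d W1 W2 R C = (\<lambda>\<sigma> \<tau>. \<Sum>p\<in>pre L R C. cm L d W1 W2 p \<sigma> \<tau>)"

lemma comm_expand:
  assumes S: "local_decomp L d W1 S" and V: "local_decomp L d W2 V"
    and c: "\<sigma> \<in> configs L d" "\<tau> \<in> configs L d"
  shows "commutator L d S V \<sigma> \<tau> = (\<Sum>R\<in>{1..L}. \<Sum>C\<in>blocks L R. Wc L d W1 W2 R C \<sigma> \<tau>)"
proof -
  let ?I = "Idx L"
  let ?P = "{p \<in> ?I \<times> ?I. ov p}"
  have "commutator L d S V \<sigma> \<tau> = (\<Sum>q1\<in>?I. \<Sum>q2\<in>?I.
            op_mult L d (W1 (fst q1) (snd q1)) (W2 (fst q2) (snd q2)) \<sigma> \<tau>)
      - (\<Sum>q2\<in>?I. \<Sum>q1\<in>?I. op_mult L d (W2 (fst q2) (snd q2)) (W1 (fst q1) (snd q1)) \<sigma> \<tau>)"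
    unfolding commutator_def using mult_expand[OF S V c] mult_expand[OF V S c] by simp
  also have "(\<Sum>q2\<in>?I. \<Sum>q1\<in>?I. op_mult L d (W2 (fst q2) (snd q2)) (W1 (fst q1) (snd q1)) \<sigma> \<tau>)
      = (\<Sum>q1\<in>?I. \<Sum>q2\<in>?I. op_mult L d (W2 (fst q2) (snd q2)) (W1 (fst q1) (snd q1)) \<sigma> \<tau>)"
    by (rule sum.swap)
  also have "(\<Sum>q1\<in>?I. \<Sum>q2\<in>?I.
            op_mult L d (W1 (fst q1) (snd q1)) (W2 (fst q2) (snd q2)) \<sigma> \<tau>)
      - (\<Sum>q1\<in>?I. \<Sum>q2\<in>?I. op_mult L d (W2 (fst q2) (snd q2)) (W1 (fst q1) (snd q1)) \<sigma> \<tau>)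
      = (\<Sum>q1\<in>?I. \<Sum>q2\<in>?I. cm L d W1 W2 (q1, q2) \<sigma> \<tau>)"
    unfolding cm_def commutator_def by (simp add: sum_subtractf)
  also have "\<dots> = (\<Sum>p\<in>?I \<times> ?I. cm L d W1 W2 p \<sigma> \<tau>)"
    by (simp add: sum.cartesian_product)
  also have "\<dots> = (\<Sum>p\<in>?P. cm L d W1 W2 p \<sigma> \<tau>)"
  proof (rule sum.mono_neutral_right)
    show "\<forall>p\<in>?I \<times> ?I - ?P. cm L d W1 W2 p \<sigma> \<tau> = 0"
    proof
      fix p assume p: "p \<in> ?I \<times> ?I - ?P"
      obtain r A s B where pp: "p = ((r,A),(s,B))" by (metis prod.collapse)
      have idx: "r \<in> {1..L}" "A \<in> blocks L r" "s \<in> {1..L}" "B \<in> blocks L s" and dj: "A \<inter> B = {}"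
        using p pp by (auto simp: Idx_iff ov_def)
      have sA: "supported_on L d A (W1 r A)" using S idx unfolding local_decomp_def by auto
      have sB: "supported_on L d B (W2 s B)" using V idx unfolding local_decomp_def by auto
      show "cm L d W1 W2 p \<sigma> \<tau> = 0" unfolding pp cm_def using comm_disj[OF sA sB dj c] by simp
    qed
  qed auto
  also have "\<dots> = (\<Sum>y\<in>?I. \<Sum>p\<in>{p. p \<in> ?P \<and> gmap L p = y}. cm L d W1 W2 p \<sigma> \<tau>)"
  proof (rule sum.group[symmetric])
    show "gmap L ` ?P \<subseteq> ?I"
    proof
      fix y assume "y \<in> gmap L ` ?P"
      then obtain p where p: "p \<in> ?P" "y = gmap L p" by blast
      obtain r A s B where pp: "p = ((r,A),(s,B))" by (metis prod.collapse)
      have idx: "((r,A),(s,B)) \<in> Idx L \<times> Idx L" and ovp: "A \<inter> B \<noteq> {}"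
        using p pp by (auto simp: ov_def)
      have rs: "r \<in> {1..L}" "s \<in> {1..L}" using idx by (auto simp: Idx_iff)
      show "y \<in> ?I"
      proof (cases "r + s \<le> L")
        case True
        obtain c u v where t: "trip L r A s B = (c, u, v)" by (metis prod_cases3)
        have "c \<in> sites L" using trip_props[OF idx ovp t] by blast
        then have "block L (r + s - 1) c \<in> blocks L (r + s - 1)" using True by (simp add: blocks_def)
        then show ?thesis using p(2) pp True t rs by (auto simp: gmap_def Idx_iff)
      next
        case False
        have "L > 0" using rs by auto
        then show ?thesis using p(2) pp False by (simp add: gmap_def Idx_iff sites_in_blocks)
      qed
    qed
  qed auto
  also have "\<dots> = (\<Sum>y\<in>?I. Wc L d W1 W2 (fst y) (snd y) \<sigma> \<tau>)"
  proof (rule sum.cong[OF refl])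
    fix y :: "nat \<times> site set"
    have "{p. p \<in> ?P \<and> gmap L p = y} = pre L (fst y) (snd y)" by (auto simp: pre_def)
    then show "(\<Sum>p\<in>{p. p \<in> ?P \<and> gmap L p = y}. cm L d W1 W2 p \<sigma> \<tau>) = Wc L d W1 W2 (fst y) (snd y) \<sigma> \<tau>"
      by (simp add: Wc_def)
  qed
  also have "\<dots> = (\<Sum>R\<in>{1..L}. \<Sum>C\<in>blocks L R. Wc L d W1 W2 R C \<sigma> \<tau>)"
    unfolding Idx_def by (subst sum.Sigma) (auto simp: case_prod_beta)
  finally show ?thesis .
qed


lemma norm_bound1:
  assumes D: "decaying_decomp L d W K \<mu> \<alpha>" and a: "\<alpha> \<ge> 4" and r: "r \<ge> 1" and A: "A \<in> blocks L r"
  shows "op_norm L d (W r A) * real r ^ 4 * exp (\<mu> * real r) \<le> K"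
proof -
  have "real r ^ 4 = real r powr 4" using r by (simp add: powr_realpow)
  also have "\<dots> \<le> real r powr \<alpha>" using r a by (intro powr_mono) auto
  finally have p: "real r ^ 4 \<le> real r powr \<alpha>" .
  have "op_norm L d (W r A) * real r ^ 4 * exp (\<mu> * real r) \<le> op_norm L d (W r A) * real r powr \<alpha> * exp (\<mu> * real r)"
    using p op_norm_nonneg[of L d "W r A"] by (intro mult_right_mono mult_left_mono) auto
  also have "\<dots> \<le> K" using D r A unfolding decaying_decomp_def by blast
  finally show ?thesis .
qed

lemma K_nonneg:
  assumes D: "decaying_decomp L d W K \<mu> \<alpha>" and r: "r \<ge> 1" and A: "A \<in> blocks L r"
  shows "0 \<le> K"
proof -
  have "0 \<le> op_norm L d (W r A) * real r powr \<alpha> * exp (\<mu> * real r)"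
    using op_norm_nonneg[of L d "W r A"] by simp
  also have "\<dots> \<le> K" using D r A unfolding decaying_decomp_def by blast
  finally show ?thesis .
qed

lemma term_bound:
  assumes D1: "decaying_decomp L d W1 K \<mu> \<alpha>" and D2: "decaying_decomp L d W2 J \<mu> \<beta>"
    and a: "\<alpha> \<ge> 4" and b: "\<beta> \<ge> 4" and mu: "\<mu> \<ge> 0"
    and p: "((r,A),(s,B)) \<in> pre L R C"
  shows "op_norm L d (cm L d W1 W2 ((r,A),(s,B))) * exp (\<mu> * real R) \<le> 2 * K * J * w r s"
proof -
  note e = pre_elim[OF p]
  have r: "r \<ge> 1" "A \<in> blocks L r" and s: "s \<ge> 1" "B \<in> blocks L s" using e by auto
  have RR: "R \<le> r + s" using pre_R[OF p] by blast
  define x where "x = op_norm L d (W1 r A)"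
  define y where "y = op_norm L d (W2 s B)"
  have x0: "0 \<le> x" and y0: "0 \<le> y" unfolding x_def y_def by (rule op_norm_nonneg)+
  have bx: "x * real r ^ 4 * exp (\<mu> * real r) \<le> K" unfolding x_def by (rule norm_bound1[OF D1 a r])
  have by': "y * real s ^ 4 * exp (\<mu> * real s) \<le> J" unfolding y_def by (rule norm_bound1[OF D2 b s])
  have "(x * real r ^ 4 * exp (\<mu> * real r)) * (y * real s ^ 4 * exp (\<mu> * real s)) \<le> K * J"
    using bx by' x0 y0 K_nonneg[OF D1 r] by (intro mult_mono) auto
  then have xy: "x * y * (real r ^ 4 * real s ^ 4) * exp (\<mu> * real (r + s)) \<le> K * J"
    by (simp add: algebra_simps exp_add)
  have ex: "exp (\<mu> * real R) \<le> exp (\<mu> * real (r + s))" using RR mu by (simp add: mult_left_mono)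
  have pos: "real r ^ 4 * real s ^ 4 > 0" using r s by simp
  have "op_norm L d (cm L d W1 W2 ((r,A),(s,B))) * exp (\<mu> * real R) \<le> (2 * x * y) * exp (\<mu> * real R)"
    unfolding cm_def x_def y_def fst_conv snd_conv by (intro mult_right_mono op_norm_comm) auto
  also have "\<dots> \<le> (2 * x * y) * exp (\<mu> * real (r + s))" using ex x0 y0 by (intro mult_left_mono) auto
  also have "\<dots> = 2 * (x * y * (real r ^ 4 * real s ^ 4) * exp (\<mu> * real (r + s))) * w r s"
    using pos r s by (simp add: w_def field_simps)
  also have "\<dots> \<le> 2 * (K * J) * w r s" using xy by (intro mult_right_mono mult_left_mono) (auto simp: w_def)
  finally show ?thesis by simp
qed

theorem lemma5:
  fixes \<alpha> \<beta> :: real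
  assumes "\<alpha> \<ge> 4" and "\<beta> \<ge> 4"
  shows "\<exists>c::real. \<forall>(L::nat) (d::site \<Rightarrow> nat) (K::real) (J::real) (\<mu>::real) (S::op) (V::op).
           \<mu> \<ge> 0 \<longrightarrow> decaying L d S K \<mu> \<alpha> \<longrightarrow> decaying L d V J \<mu> \<beta> \<longrightarrow>
           decaying L d (commutator L d S V) (c * K * J) \<mu> 0"
proof (intro exI allI impI)
  fix L d K J \<mu> S V
  assume mu: "(\<mu>::real) \<ge> 0" and dS: "decaying L d S K \<mu> \<alpha>" and dV: "decaying L d V J \<mu> \<beta>"
  obtain W1 where S: "local_decomp L d W1 S" and D1: "decaying_decomp L d W1 K \<mu> \<alpha>"
    using dS unfolding decaying_def by blast
  obtain W2 where V: "local_decomp L d W2 V" and D2: "decaying_decomp L d W2 J \<mu> \<beta>"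
    using dV unfolding decaying_def by blast
  have ld: "local_decomp L d (Wc L d W1 W2) (commutator L d S V)"
    unfolding local_decomp_def
  proof (intro conjI allI impI ballI)
    fix R C assume R: "R \<ge> 1" and C: "C \<in> blocks L R"
    show "supported_on L d C (Wc L d W1 W2 R C)"
      unfolding Wc_def
    proof (rule supp_sum)
      fix p assume p: "p \<in> pre L R C"
      obtain r A s B where pp: "p = ((r,A),(s,B))" by (metis prod.collapse)
      note e = pre_elim[OF p[unfolded pp]]
      have sA: "supported_on L d A (W1 r A)" using S e unfolding local_decomp_def by auto
      have sB: "supported_on L d B (W2 s B)" using V e unfolding local_decomp_def by auto
      have sub: "A \<subseteq> C" "B \<subseteq> C" using pre_sub[OF p[unfolded pp]] by auto
      show "supported_on L d C (cm L d W1 W2 p)" unfolding pp cm_def fst_conv snd_conv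
        by (intro supp_comm supp_mono[OF sA sub(1)] supp_mono[OF sB sub(2)])
    qed
  next
    fix \<sigma> \<tau> assume "\<sigma> \<in> configs L d" "\<tau> \<in> configs L d"
    then show "commutator L d S V \<sigma> \<tau> = (\<Sum>R\<in>{1..L}. \<Sum>C\<in>blocks L R. Wc L d W1 W2 R C \<sigma> \<tau>)"
      by (rule comm_expand[OF S V])
  qed
  have dd: "decaying_decomp L d (Wc L d W1 W2) (64 * K * J) \<mu> 0"
    unfolding decaying_decomp_def
  proof (intro allI impI ballI)
    fix R C assume R: "R \<ge> 1" and C: "C \<in> blocks L R"
    have K0: "0 \<le> K" by (rule K_nonneg[OF D1 R C])
    have J0: "0 \<le> J" by (rule K_nonneg[OF D2 R C])
    have "op_norm L d (Wc L d W1 W2 R C) \<le> (\<Sum>p\<in>pre L R C. op_norm L d (cm L d W1 W2 p))"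
      unfolding Wc_def by (rule op_norm_sum) simp
    then have "op_norm L d (Wc L d W1 W2 R C) * exp (\<mu> * real R)
        \<le> (\<Sum>p\<in>pre L R C. op_norm L d (cm L d W1 W2 p)) * exp (\<mu> * real R)"
      by (rule mult_right_mono) simp
    also have "\<dots> = (\<Sum>p\<in>pre L R C. op_norm L d (cm L d W1 W2 p) * exp (\<mu> * real R))"
      by (simp add: sum_distrib_right)
    also have "\<dots> \<le> (\<Sum>p\<in>pre L R C. 2 * K * J * w (fst (fst p)) (fst (snd p)))"
    proof (rule sum_mono)
      fix p assume p: "p \<in> pre L R C"
      obtain r A s B where pp: "p = ((r,A),(s,B))" by (metis prod.collapse)
      show "op_norm L d (cm L d W1 W2 p) * exp (\<mu> * real R) \<le> 2 * K * J * w (fst (fst p)) (fst (snd p))"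
        using term_bound[OF D1 D2 assms mu p[unfolded pp]] pp by simp
    qed
    also have "\<dots> = 2 * K * J * (\<Sum>p\<in>pre L R C. w (fst (fst p)) (fst (snd p)))"
      by (simp add: sum_distrib_left)
    also have "\<dots> \<le> 2 * K * J * 32"
      using count_all[OF R C] K0 J0 by (intro mult_left_mono) auto
    finally show "op_norm L d (Wc L d W1 W2 R C) * real R powr 0 * exp (\<mu> * real R) \<le> 64 * K * J"
      using R by simp
  qed
  show "decaying L d (commutator L d S V) (64 * K * J) \<mu> 0"
    unfolding decaying_def using ld dd by blast
qed


end
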